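(* Let $\mathcal{B}$ be a bicategory and $j,k\in\mathbb{N}$. Suppose given: objects $a_u$ ($0\le u\le j$); $1$-cells $f^z_{uv}\colon a_u\to a_v$ for all $0\le u<v\le j$, $0\le z\le k$; $2$-cells $\alpha^z_{u,u+1}\colon f^{z-1}_{u,u+1}\Rightarrow f^z_{u,u+1}$ for all $0\le u<j$, $1\le z\le k$; and invertible $2$-cells $\iota^z_{uvw}\colon f^z_{vw}\circ f^z_{uv}\Rightarrow f^z_{uw}$ for all $0\le u<v<w\le j$, $0\le z\le k$, satisfying the associativity axiom (A2) below. Then there is a unique family of $2$-cells $\alpha^z_{uv}\colon f^{z-1}_{uv}\Rightarrow f^z_{uv}$ for all $0\le u<u+1<v\le j$, $1\le z\le k$, such that together with the given data (and the given $\alpha^z_{u,u+1}$) the quadruple $\big((a_u),(f^z_{uv}),(\alpha^z_{uv}),(\iota^z_{uvw})\big)$ satisfies axiom (A1) below, i.e. is an element of $\mathcal{N}\mathcal{B}(j,k)$.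
   Context: For a bicategory $\mathcal{B}$ (composition $\circ$ of $1$-cells, horizontal composition $*$ and vertical composition $\cdot$ of $2$-cells, associator $s$) and $(j,k)\in\mathbb{N}^2$, $\mathcal{N}\mathcal{B}(j,k)$ is the set of quadruples $\big((a_u)_{0\le u\le j},(f^z_{uv})_{0\le u<v\le j,\,0\le z\le k},(\alpha^z_{uv})_{0\le u<v\le j,\,1\le z\le k},(\iota^z_{uvw})_{0\le u<v<w\le j,\,0\le z\le k}\big)$ where $a_u$ are objects, $f^z_{uv}\colon a_u\to a_v$ are $1$-cells, $\alpha^z_{uv}\colon f^{z-1}_{uv}\Rightarrow f^z_{uv}$ are $2$-cells and $\iota^z_{uvw}\colon f^z_{vw}\circ f^z_{uv}\Rightarrow f^z_{uw}$ are invertible $2$-cells, satisfying: (A1) for all $u<v<w$ and $1\le z\le k$: $\iota^z_{uvw}\cdot(\alpha^z_{vw}*\alpha^z_{uv})=\alpha^z_{uw}\cdot\iota^{z-1}_{uvw}$; (A2) for all $u<v<w<x$ and $0\le z\le k$: $\iota^z_{uwx}\cdot(1_{f^z_{wx}}*\iota^z_{uvw})\cdot s=\iota^z_{uvx}\cdot(\iota^z_{vwx}*1_{f^z_{uv}})$, where $s\colon(f^z_{wx}\circ f^z_{vw})\circ f^z_{uv}\Rightarrow f^z_{wx}\circ(f^z_{vw}\circ f^z_{uv})$ is the associator component. *)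

theory Defs
  imports Main
begin

text \<open>Convention: comp1 g f is g \<circ> f
(f first), vcomp b a is b \<cdot> a (a first), hcomp b a is b * a with
a : f \<Rightarrow> f', b : g \<Rightarrow> g' giving g\<circ>f \<Rightarrow> g'\<circ>f'.
assoc h g f : (h\<circ>g)\<circ>f \<Rightarrow> h\<circ>(g\<circ>f).\<close>

record ('o, 'a, 'c) bicat =
  Obj :: "'o set"
  Hom1 :: "'a set"
  src :: "'a \<Rightarrow> 'o"
  tgt :: "'a \<Rightarrow> 'o"
  Hom2 :: "'c set"
  dom2 :: "'c \<Rightarrow> 'a"
  cod2 :: "'c \<Rightarrow> 'a"
  comp1 :: "'a \<Rightarrow> 'a \<Rightarrow> 'a"
  idc :: "'o \<Rightarrow> 'a"
  vcomp :: "'c \<Rightarrow> 'c \<Rightarrow> 'c"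
  hcomp :: "'c \<Rightarrow> 'c \<Rightarrow> 'c"
  id2 :: "'a \<Rightarrow> 'c"
  assoc :: "'a \<Rightarrow> 'a \<Rightarrow> 'a \<Rightarrow> 'c"
  lunit :: "'a \<Rightarrow> 'c"
  runit :: "'a \<Rightarrow> 'c"

definition hom1 :: "('o,'a,'c,'m) bicat_scheme \<Rightarrow> 'a \<Rightarrow> 'o \<Rightarrow> 'o \<Rightarrow> bool" where
  "hom1 B f a b \<longleftrightarrow> f \<in> Hom1 B \<and> src B f = a \<and> tgt B f = b"

definition arr2 :: "('o,'a,'c,'m) bicat_scheme \<Rightarrow> 'c \<Rightarrow> 'a \<Rightarrow> 'a \<Rightarrow> bool" where
  "arr2 B \<alpha> f g \<longleftrightarrow> \<alpha> \<in> Hom2 B \<and> dom2 B \<alpha> = f \<and> cod2 B \<alpha> = g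
     \<and> f \<in> Hom1 B \<and> g \<in> Hom1 B \<and> src B f = src B g \<and> tgt B f = tgt B g"

definition iso2 :: "('o,'a,'c,'m) bicat_scheme \<Rightarrow> 'c \<Rightarrow> bool" where
  "iso2 B \<alpha> \<longleftrightarrow> \<alpha> \<in> Hom2 B \<and>
     (\<exists>\<beta>. arr2 B \<beta> (cod2 B \<alpha>) (dom2 B \<alpha>) \<and>
          vcomp B \<beta> \<alpha> = id2 B (dom2 B \<alpha>) \<and> vcomp B \<alpha> \<beta> = id2 B (cod2 B \<alpha>))"

definition bicategory :: "('o,'a,'c,'m) bicat_scheme \<Rightarrow> bool" where
  "bicategory B \<longleftrightarrow>
    (\<forall>f\<in>Hom1 B. src B f \<in> Obj B \<and> tgt B f \<in> Obj B) \<and>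
    (\<forall>a\<in>Obj B. hom1 B (idc B a) a a) \<and>
    (\<forall>f g. f \<in> Hom1 B \<and> g \<in> Hom1 B \<and> tgt B f = src B g
       \<longrightarrow> hom1 B (comp1 B g f) (src B f) (tgt B g)) \<and>
    (\<forall>\<alpha>\<in>Hom2 B. arr2 B \<alpha> (dom2 B \<alpha>) (cod2 B \<alpha>)) \<and>
    (\<forall>f\<in>Hom1 B. arr2 B (id2 B f) f f) \<and>
    (\<forall>\<alpha> \<beta> f g h. arr2 B \<alpha> f g \<and> arr2 B \<beta> g h \<longrightarrow> arr2 B (vcomp B \<beta> \<alpha>) f h) \<and>
    (\<forall>\<alpha>\<in>Hom2 B. vcomp B \<alpha> (id2 B (dom2 B \<alpha>)) = \<alpha> \<and> vcomp B (id2 B (cod2 B \<alpha>)) \<alpha> = \<alpha>) \<and>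
    (\<forall>\<alpha> \<beta> \<gamma> f g h i. arr2 B \<alpha> f g \<and> arr2 B \<beta> g h \<and> arr2 B \<gamma> h i
       \<longrightarrow> vcomp B \<gamma> (vcomp B \<beta> \<alpha>) = vcomp B (vcomp B \<gamma> \<beta>) \<alpha>) \<and>
    (\<forall>\<alpha> \<beta> f f' g g'. arr2 B \<alpha> f f' \<and> arr2 B \<beta> g g' \<and> tgt B f = src B g
       \<longrightarrow> arr2 B (hcomp B \<beta> \<alpha>) (comp1 B g f) (comp1 B g' f')) \<and>
    (\<forall>f g. f \<in> Hom1 B \<and> g \<in> Hom1 B \<and> tgt B f = src B g
       \<longrightarrow> hcomp B (id2 B g) (id2 B f) = id2 B (comp1 B g f)) \<and>
    (\<forall>\<alpha> \<alpha>' \<beta> \<beta>' f f' f'' g g' g''.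
       arr2 B \<alpha> f f' \<and> arr2 B \<alpha>' f' f'' \<and> arr2 B \<beta> g g' \<and> arr2 B \<beta>' g' g'' \<and> tgt B f = src B g
       \<longrightarrow> hcomp B (vcomp B \<beta>' \<beta>) (vcomp B \<alpha>' \<alpha>) = vcomp B (hcomp B \<beta>' \<alpha>') (hcomp B \<beta> \<alpha>)) \<and>
    (\<forall>f g h. f \<in> Hom1 B \<and> g \<in> Hom1 B \<and> h \<in> Hom1 B \<and> tgt B f = src B g \<and> tgt B g = src B h
       \<longrightarrow> arr2 B (assoc B h g f) (comp1 B (comp1 B h g) f) (comp1 B h (comp1 B g f))
           \<and> iso2 B (assoc B h g f)) \<and>
    (\<forall>\<alpha> \<beta> \<gamma> f f' g g' h h'.
       arr2 B \<alpha> f f' \<and> arr2 B \<beta> g g' \<and> arr2 B \<gamma> h h' \<and> tgt B f = src B g \<and> tgt B g = src B h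
       \<longrightarrow> vcomp B (assoc B h' g' f') (hcomp B (hcomp B \<gamma> \<beta>) \<alpha>)
           = vcomp B (hcomp B \<gamma> (hcomp B \<beta> \<alpha>)) (assoc B h g f)) \<and>
    (\<forall>f\<in>Hom1 B. arr2 B (lunit B f) (comp1 B (idc B (tgt B f)) f) f \<and> iso2 B (lunit B f)
       \<and> arr2 B (runit B f) (comp1 B f (idc B (src B f))) f \<and> iso2 B (runit B f)) \<and>
    (\<forall>\<alpha> f f'. arr2 B \<alpha> f f' \<longrightarrow>
       vcomp B (lunit B f') (hcomp B (id2 B (idc B (tgt B f))) \<alpha>) = vcomp B \<alpha> (lunit B f) \<and>
       vcomp B (runit B f') (hcomp B \<alpha> (id2 B (idc B (src B f)))) = vcomp B \<alpha> (runit B f)) \<and>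
    (\<forall>f g h k. f \<in> Hom1 B \<and> g \<in> Hom1 B \<and> h \<in> Hom1 B \<and> k \<in> Hom1 B \<and>
       tgt B f = src B g \<and> tgt B g = src B h \<and> tgt B h = src B k
       \<longrightarrow> vcomp B (assoc B k h (comp1 B g f)) (assoc B (comp1 B k h) g f)
           = vcomp B (hcomp B (id2 B k) (assoc B h g f))
               (vcomp B (assoc B k (comp1 B h g) f) (hcomp B (assoc B k h g) (id2 B f)))) \<and>
    (\<forall>f g. f \<in> Hom1 B \<and> g \<in> Hom1 B \<and> tgt B f = src B g
       \<longrightarrow> vcomp B (hcomp B (id2 B g) (lunit B f)) (assoc B g (idc B (tgt B f)) f)
           = hcomp B (runit B g) (id2 B f))"

definition axA1 where
  "axA1 B j k f \<alpha> \<iota> \<longleftrightarrow>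
    (\<forall>u v w z. u < v \<and> v < w \<and> w \<le> j \<and> 1 \<le> z \<and> z \<le> k \<longrightarrow>
       vcomp B (\<iota> z u v w) (hcomp B (\<alpha> z v w) (\<alpha> z u v)) = vcomp B (\<alpha> z u w) (\<iota> (z - 1) u v w))"

definition axA2 where
  "axA2 B j k f \<iota> \<longleftrightarrow>
    (\<forall>u v w x z. u < v \<and> v < w \<and> w < x \<and> x \<le> j \<and> z \<le> k \<longrightarrow>
       vcomp B (vcomp B (\<iota> z u w x) (hcomp B (id2 B (f z w x)) (\<iota> z u v w)))
               (assoc B (f z w x) (f z v w) (f z u v))
       = vcomp B (\<iota> z u v x) (hcomp B (\<iota> z v w x) (id2 B (f z u v))))"

text \<open>Elements of NB(j,k).  Indices: a u; f z u v = f^z_{uv}; \<alpha> z u v = \<alpha>^z_{uv};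
  \<iota> z u v w = \<iota>^z_{uvw}.  Only values at the listed indices matter.\<close>
definition NB_elem where
  "NB_elem B j k a f \<alpha> \<iota> \<longleftrightarrow>
    (\<forall>u\<le>j. a u \<in> Obj B) \<and>
    (\<forall>u v z. u < v \<and> v \<le> j \<and> z \<le> k \<longrightarrow> hom1 B (f z u v) (a u) (a v)) \<and>
    (\<forall>u v z. u < v \<and> v \<le> j \<and> 1 \<le> z \<and> z \<le> k \<longrightarrow> arr2 B (\<alpha> z u v) (f (z - 1) u v) (f z u v)) \<and>
    (\<forall>u v w z. u < v \<and> v < w \<and> w \<le> j \<and> z \<le> k \<longrightarrow>
       arr2 B (\<iota> z u v w) (comp1 B (f z v w) (f z u v)) (f z u w) \<and> iso2 B (\<iota> z u v w)) \<and>
    axA1 B j k f \<alpha> \<iota> \<and> axA2 B j k f \<iota>"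

definition ext_alpha :: "(nat \<Rightarrow> nat \<Rightarrow> 'c) \<Rightarrow> (nat \<Rightarrow> nat \<Rightarrow> nat \<Rightarrow> 'c) \<Rightarrow> nat \<Rightarrow> nat \<Rightarrow> nat \<Rightarrow> 'c" where
  "ext_alpha alpha1 \<alpha> = (\<lambda>z u v. if v = Suc u then alpha1 z u else \<alpha> z u v)"

end

theory Submission imports Defs begin

locale bic = fixes B :: "('o,'a,'c,'m) bicat_scheme" assumes bicat: "bicategory B"
begin
abbreviation V where "V \<equiv> vcomp B"
abbreviation H where "H \<equiv> hcomp B"
abbreviation I where "I \<equiv> id2 B"
abbreviation C where "C \<equiv> comp1 B"
abbreviation S where "S \<equiv> assoc B"
lemmas c_comp = bicat[unfolded bicategory_def, THEN conjunct2, THEN conjunct2, THEN conjunct1]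
lemmas c_hom2 = bicat[unfolded bicategory_def, THEN conjunct2, THEN conjunct2, THEN conjunct2, THEN conjunct1]
lemmas c_id = bicat[unfolded bicategory_def, THEN conjunct2, THEN conjunct2, THEN conjunct2, THEN conjunct2, THEN conjunct1]
lemmas c_v = bicat[unfolded bicategory_def, THEN conjunct2, THEN conjunct2, THEN conjunct2, THEN conjunct2, THEN conjunct2, THEN conjunct1]
lemmas c_idlaw = bicat[unfolded bicategory_def, THEN conjunct2, THEN conjunct2, THEN conjunct2, THEN conjunct2, THEN conjunct2, THEN conjunct2, THEN conjunct1]
lemmas c_vassoc = bicat[unfolded bicategory_def, THEN conjunct2, THEN conjunct2, THEN conjunct2, THEN conjunct2, THEN conjunct2, THEN conjunct2, THEN conjunct2, THEN conjunct1]
lemmas c_h = bicat[unfolded bicategory_def, THEN conjunct2, THEN conjunct2, THEN conjunct2, THEN conjunct2, THEN conjunct2, THEN conjunct2, THEN conjunct2, THEN conjunct2, THEN conjunct1]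
lemmas c_hid = bicat[unfolded bicategory_def, THEN conjunct2, THEN conjunct2, THEN conjunct2, THEN conjunct2, THEN conjunct2, THEN conjunct2, THEN conjunct2, THEN conjunct2, THEN conjunct2, THEN conjunct1]
lemmas c_int = bicat[unfolded bicategory_def, THEN conjunct2, THEN conjunct2, THEN conjunct2, THEN conjunct2, THEN conjunct2, THEN conjunct2, THEN conjunct2, THEN conjunct2, THEN conjunct2, THEN conjunct2, THEN conjunct1]
lemmas c_assoc = bicat[unfolded bicategory_def, THEN conjunct2, THEN conjunct2, THEN conjunct2, THEN conjunct2, THEN conjunct2, THEN conjunct2, THEN conjunct2, THEN conjunct2, THEN conjunct2, THEN conjunct2, THEN conjunct2, THEN conjunct1]
lemmas c_anat = bicat[unfolded bicategory_def, THEN conjunct2, THEN conjunct2, THEN conjunct2, THEN conjunct2, THEN conjunct2, THEN conjunct2, THEN conjunct2, THEN conjunct2, THEN conjunct2, THEN conjunct2, THEN conjunct2, THEN conjunct2, THEN conjunct1]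

lemma comp_hom: "f \<in> Hom1 B \<Longrightarrow> g \<in> Hom1 B \<Longrightarrow> tgt B f = src B g \<Longrightarrow>
  C g f \<in> Hom1 B \<and> src B (C g f) = src B f \<and> tgt B (C g f) = tgt B g"
  using c_comp unfolding hom1_def by blast

lemma arr_v: "arr2 B x f g \<Longrightarrow> arr2 B y g h \<Longrightarrow> arr2 B (V y x) f h"
  using c_v by blast

lemma arr_h: "arr2 B x f f' \<Longrightarrow> arr2 B y g g' \<Longrightarrow> tgt B f = src B g \<Longrightarrow> arr2 B (H y x) (C g f) (C g' f')"
  using c_h by blast

lemma arr_id: "f \<in> Hom1 B \<Longrightarrow> arr2 B (I f) f f"
  using c_id by blast

lemma vassoc: "arr2 B x f g \<Longrightarrow> arr2 B y g h \<Longrightarrow> arr2 B w h i \<Longrightarrow> V w (V y x) = V (V w y) x"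
  using c_vassoc by blast

lemma idr: "arr2 B x f g \<Longrightarrow> V x (I f) = x"
  using c_idlaw unfolding arr2_def by metis

lemma idl: "arr2 B x f g \<Longrightarrow> V (I g) x = x"
  using c_idlaw unfolding arr2_def by metis

lemma interchange: "arr2 B x f f' \<Longrightarrow> arr2 B x' f' f'' \<Longrightarrow> arr2 B y g g' \<Longrightarrow> arr2 B y' g' g'' \<Longrightarrow> tgt B f = src B g
   \<Longrightarrow> H (V y' y) (V x' x) = V (H y' x') (H y x)"
  using c_int by blast

lemma hid: "f \<in> Hom1 B \<Longrightarrow> g \<in> Hom1 B \<Longrightarrow> tgt B f = src B g \<Longrightarrow> H (I g) (I f) = I (C g f)"
  using c_hid by blast

lemma assoc_arr: "f \<in> Hom1 B \<Longrightarrow> g \<in> Hom1 B \<Longrightarrow> h \<in> Hom1 B \<Longrightarrow> tgt B f = src B g \<Longrightarrow> tgt B g = src B h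
  \<Longrightarrow> arr2 B (S h g f) (C (C h g) f) (C h (C g f))"
  using c_assoc by blast

lemma assoc_nat: "arr2 B x f f' \<Longrightarrow> arr2 B y g g' \<Longrightarrow> arr2 B w h h' \<Longrightarrow> tgt B f = src B g \<Longrightarrow> tgt B g = src B h
  \<Longrightarrow> V (S h' g' f') (H (H w y) x) = V (H w (H y x)) (S h g f)"
  using c_anat by blast

lemma assoc_iso: "f \<in> Hom1 B \<Longrightarrow> g \<in> Hom1 B \<Longrightarrow> h \<in> Hom1 B \<Longrightarrow> tgt B f = src B g \<Longrightarrow> tgt B g = src B h
  \<Longrightarrow> iso2 B (S h g f)"
  using c_assoc by blast

definition inv2 where "inv2 x = (SOME y. arr2 B y (cod2 B x) (dom2 B x) \<and> V y x = I (dom2 B x) \<and> V x y = I (cod2 B x))"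

lemma inv2: assumes "arr2 B x f g" "iso2 B x"
  shows "arr2 B (inv2 x) g f \<and> V (inv2 x) x = I f \<and> V x (inv2 x) = I g"
proof -
  have d: "dom2 B x = f" "cod2 B x = g" using assms(1) unfolding arr2_def by auto
  have "\<exists>y. arr2 B y (cod2 B x) (dom2 B x) \<and> V y x = I (dom2 B x) \<and> V x y = I (cod2 B x)"
    using assms(2) unfolding iso2_def by blast
  from someI_ex[OF this] show ?thesis unfolding inv2_def d .
qed

lemma cancel: assumes "arr2 B x f g" "arr2 B y f g" "arr2 B e h f" "iso2 B e" "V x e = V y e"
  shows "x = y"
proof -
  note i = inv2[OF assms(3,4)]
  have "x = V x (V e (inv2 e))" using i idr[OF assms(1)] by simp
  also have "\<dots> = V (V x e) (inv2 e)" using vassoc i assms by blast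
  also have "\<dots> = V (V y e) (inv2 e)" using assms by simp
  also have "\<dots> = V y (V e (inv2 e))" using vassoc i assms by metis
  also have "\<dots> = y" using i idr[OF assms(2)] by simp
  finally show ?thesis .
qed

lemma iso_hid: assumes "arr2 B e f f'" "iso2 B e" "g \<in> Hom1 B" "tgt B f = src B g"
  shows "iso2 B (H (I g) e)"
proof -
  note i = inv2[OF assms(1,2)]
  have t: "tgt B f' = src B g" using assms unfolding arr2_def by auto
  have fh: "f \<in> Hom1 B" "f' \<in> Hom1 B" using assms(1) unfolding arr2_def by auto
  have a1: "arr2 B (H (I g) e) (C g f) (C g f')" using arr_h[OF assms(1) arr_id[OF assms(3)] assms(4)] .
  have a2: "arr2 B (H (I g) (inv2 e)) (C g f') (C g f)" using arr_h[OF conjunct1[OF i] arr_id[OF assms(3)] t] .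
  have gg: "V (I g) (I g) = I g" using idl[OF arr_id[OF assms(3)]] .
  have e1: "V (H (I g) (inv2 e)) (H (I g) e) = I (C g f)"
    using interchange[OF assms(1) conjunct1[OF i] arr_id[OF assms(3)] arr_id[OF assms(3)] assms(4)] gg i hid fh assms by metis
  have e2: "V (H (I g) e) (H (I g) (inv2 e)) = I (C g f')"
    using interchange[OF conjunct1[OF i] assms(1) arr_id[OF assms(3)] arr_id[OF assms(3)] t] gg i hid fh assms t by metis
  show ?thesis unfolding iso2_def using a1 a2 e1 e2 unfolding arr2_def by auto
qed
end

locale NBs = bic B for B :: "('o,'a,'c,'m) bicat_scheme" +
  fixes j k :: nat and a :: "nat \<Rightarrow> 'o" and f :: "nat \<Rightarrow> nat \<Rightarrow> nat \<Rightarrow> 'a"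
    and alpha1 :: "nat \<Rightarrow> nat \<Rightarrow> 'c" and \<iota> :: "nat \<Rightarrow> nat \<Rightarrow> nat \<Rightarrow> nat \<Rightarrow> 'c"
  assumes obj: "\<forall>u\<le>j. a u \<in> Obj B"
    and one_cells: "\<forall>u v z. u < v \<and> v \<le> j \<and> z \<le> k \<longrightarrow> hom1 B (f z u v) (a u) (a v)"
    and alpha1_typ: "\<forall>u z. u < j \<and> 1 \<le> z \<and> z \<le> k \<longrightarrow>
                       arr2 B (alpha1 z u) (f (z - 1) u (Suc u)) (f z u (Suc u))"
    and iota_typ: "\<forall>u v w z. u < v \<and> v < w \<and> w \<le> j \<and> z \<le> k \<longrightarrow>
                     arr2 B (\<iota> z u v w) (comp1 B (f z v w) (f z u v)) (f z u w) \<and> iso2 B (\<iota> z u v w)"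
    and A2: "axA2 B j k f \<iota>"
begin

lemma fh: "u < v \<Longrightarrow> v \<le> j \<Longrightarrow> z \<le> k \<Longrightarrow> f z u v \<in> Hom1 B \<and> src B (f z u v) = a u \<and> tgt B (f z u v) = a v"
  using one_cells unfolding hom1_def by blast

lemma iT: "u < v \<Longrightarrow> v < w \<Longrightarrow> w \<le> j \<Longrightarrow> z \<le> k \<Longrightarrow> arr2 B (\<iota> z u v w) (C (f z v w) (f z u v)) (f z u w)"
  using iota_typ by blast

lemma iI: "u < v \<Longrightarrow> v < w \<Longrightarrow> w \<le> j \<Longrightarrow> z \<le> k \<Longrightarrow> iso2 B (\<iota> z u v w)"
  using iota_typ by blast

lemma A2': "u < v \<Longrightarrow> v < w \<Longrightarrow> w < x \<Longrightarrow> x \<le> j \<Longrightarrow> z \<le> k \<Longrightarrow>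
       V (V (\<iota> z u w x) (H (I (f z w x)) (\<iota> z u v w))) (S (f z w x) (f z v w) (f z u v))
       = V (\<iota> z u v x) (H (\<iota> z v w x) (I (f z u v)))"
  using A2 unfolding axA2_def by blast

primrec AL :: "nat \<Rightarrow> nat \<Rightarrow> nat \<Rightarrow> 'c" where
  "AL 0 z u = alpha1 z u"
| "AL (Suc n) z u = V (V (\<iota> z u (Suc u) (u + n + 2)) (H (AL n z (Suc u)) (alpha1 z u))) (inv2 (\<iota> (z - 1) u (Suc u) (u + n + 2)))"

definition E where "E = ext_alpha alpha1 (\<lambda>z u v. AL (v - Suc u) z u)"

lemma EAL: "u < v \<Longrightarrow> E z u v = AL (v - Suc u) z u"
  unfolding E_def ext_alpha_def by auto

lemma E1: "E z u (Suc u) = alpha1 z u"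
  unfolding E_def ext_alpha_def by auto

lemma Erec: assumes "Suc u < v"
  shows "E z u v = V (V (\<iota> z u (Suc u) v) (H (E z (Suc u) v) (E z u (Suc u)))) (inv2 (\<iota> (z - 1) u (Suc u) v))"
proof -
  have 1: "v - Suc u = Suc (v - Suc (Suc u))" and 2: "u + (v - Suc (Suc u)) + 2 = v" using assms by auto
  have "E z u v = AL (Suc (v - Suc (Suc u))) z u" using EAL[of u v z] assms 1 by simp
  also have "\<dots> = V (V (\<iota> z u (Suc u) v) (H (AL (v - Suc (Suc u)) z (Suc u)) (alpha1 z u))) (inv2 (\<iota> (z - 1) u (Suc u) v))"
    unfolding AL.simps(2) 2 ..
  finally show ?thesis using EAL[of "Suc u" v z] E1 assms by simp
qed

lemma ET: "u < v \<Longrightarrow> v \<le> j \<Longrightarrow> 1 \<le> z \<Longrightarrow> z \<le> k \<Longrightarrow> arr2 B (E z u v) (f (z - 1) u v) (f z u v)"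
proof (induction "v - Suc u" arbitrary: u)
  case 0
  then have "v = Suc u" by auto
  then show ?case using 0 alpha1_typ E1 by auto
next
  case (Suc n)
  then have uv: "Suc u < v" by auto
  have IH: "arr2 B (E z (Suc u) v) (f (z - 1) (Suc u) v) (f z (Suc u) v)"
    using Suc uv by auto
  have al: "arr2 B (E z u (Suc u)) (f (z - 1) u (Suc u)) (f z u (Suc u))"
    using alpha1_typ E1 Suc uv by auto
  have t: "tgt B (f (z - 1) u (Suc u)) = src B (f (z - 1) (Suc u) v)"
    using fh Suc uv by auto
  have h: "arr2 B (H (E z (Suc u) v) (E z u (Suc u))) (C (f (z - 1) (Suc u) v) (f (z - 1) u (Suc u))) (C (f z (Suc u) v) (f z u (Suc u)))"
    using arr_h[OF al IH t] .
  have i1: "arr2 B (\<iota> z u (Suc u) v) (C (f z (Suc u) v) (f z u (Suc u))) (f z u v)"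
    using iT Suc uv by auto
  have i0: "arr2 B (inv2 (\<iota> (z - 1) u (Suc u) v)) (f (z - 1) u v) (C (f (z - 1) (Suc u) v) (f (z - 1) u (Suc u)))"
    using inv2[OF iT iI] Suc uv by auto
  show ?case unfolding Erec[OF uv] using arr_v[OF i0 arr_v[OF h i1]] .
qed

lemma A1base: assumes "Suc u < w" "w \<le> j" "1 \<le> z" "z \<le> k"
  shows "V (\<iota> z u (Suc u) w) (H (E z (Suc u) w) (E z u (Suc u))) = V (E z u w) (\<iota> (z - 1) u (Suc u) w)"
proof -
  have IH: "arr2 B (E z (Suc u) w) (f (z - 1) (Suc u) w) (f z (Suc u) w)"
    using ET assms by auto
  have al: "arr2 B (E z u (Suc u)) (f (z - 1) u (Suc u)) (f z u (Suc u))"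
    using ET assms by auto
  have t: "tgt B (f (z - 1) u (Suc u)) = src B (f (z - 1) (Suc u) w)"
    using fh assms by auto
  have h: "arr2 B (H (E z (Suc u) w) (E z u (Suc u))) (C (f (z - 1) (Suc u) w) (f (z - 1) u (Suc u))) (C (f z (Suc u) w) (f z u (Suc u)))"
    using arr_h[OF al IH t] .
  have i1: "arr2 B (\<iota> z u (Suc u) w) (C (f z (Suc u) w) (f z u (Suc u))) (f z u w)"
    using iT assms by auto
  have i0': "arr2 B (\<iota> (z - 1) u (Suc u) w) (C (f (z - 1) (Suc u) w) (f (z - 1) u (Suc u))) (f (z - 1) u w)"
    using iT assms by auto
  note iv = inv2[OF i0' iI]
  have "V (E z u w) (\<iota> (z - 1) u (Suc u) w) = V (V (V (\<iota> z u (Suc u) w) (H (E z (Suc u) w) (E z u (Suc u)))) (inv2 (\<iota> (z - 1) u (Suc u) w))) (\<iota> (z - 1) u (Suc u) w)"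
    using Erec assms by simp
  also have "\<dots> = V (V (\<iota> z u (Suc u) w) (H (E z (Suc u) w) (E z u (Suc u)))) (V (inv2 (\<iota> (z - 1) u (Suc u) w)) (\<iota> (z - 1) u (Suc u) w))"
    using vassoc[OF i0' conjunct1[OF iv] arr_v[OF h i1]] assms by simp
  also have "\<dots> = V (\<iota> z u (Suc u) w) (H (E z (Suc u) w) (E z u (Suc u)))"
    using iv idr[OF arr_v[OF h i1]] assms by simp
  finally show ?thesis by simp
qed

lemma A1step: assumes "Suc u < v" "v < w" "w \<le> j" "1 \<le> z" "z \<le> k"
  and IH: "V (\<iota> z (Suc u) v w) (H (E z v w) (E z (Suc u) v)) = V (E z (Suc u) w) (\<iota> (z - 1) (Suc u) v w)"
  shows "V (\<iota> z u v w) (H (E z v w) (E z u v)) = V (E z u w) (\<iota> (z - 1) u v w)"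
proof -
  have ta: "arr2 B (E z u (Suc u)) (f (z - 1) u (Suc u)) (f z u (Suc u))"
    using ET assms by auto
  have tb: "arr2 B (E z (Suc u) v) (f (z - 1) (Suc u) v) (f z (Suc u) v)"
    using ET assms by auto
  have tc: "arr2 B (E z v w) (f (z - 1) v w) (f z v w)"
    using ET assms by auto
  have td: "arr2 B (E z u v) (f (z - 1) u v) (f z u v)"
    using ET assms by auto
  have te: "arr2 B (E z (Suc u) w) (f (z - 1) (Suc u) w) (f z (Suc u) w)"
    using ET assms by auto
  have tg: "arr2 B (E z u w) (f (z - 1) u w) (f z u w)"
    using ET assms by auto
  have izuvw: "arr2 B (\<iota> z u v w) (C (f z v w) (f z u v)) (f z u w)"
    using iT assms by auto
  have izuu1v: "arr2 B (\<iota> z u (Suc u) v) (C (f z (Suc u) v) (f z u (Suc u))) (f z u v)"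
    using iT assms by auto
  have izuu1w: "arr2 B (\<iota> z u (Suc u) w) (C (f z (Suc u) w) (f z u (Suc u))) (f z u w)"
    using iT assms by auto
  have izu1vw: "arr2 B (\<iota> z (Suc u) v w) (C (f z v w) (f z (Suc u) v)) (f z (Suc u) w)"
    using iT assms by auto
  have iyuvw: "arr2 B (\<iota> (z - 1) u v w) (C (f (z - 1) v w) (f (z - 1) u v)) (f (z - 1) u w)"
    using iT assms by auto
  have iyuu1v: "arr2 B (\<iota> (z - 1) u (Suc u) v) (C (f (z - 1) (Suc u) v) (f (z - 1) u (Suc u))) (f (z - 1) u v)"
    using iT assms by auto
  have iyuu1w: "arr2 B (\<iota> (z - 1) u (Suc u) w) (C (f (z - 1) (Suc u) w) (f (z - 1) u (Suc u))) (f (z - 1) u w)"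
    using iT assms by auto
  have iyu1vw: "arr2 B (\<iota> (z - 1) (Suc u) v w) (C (f (z - 1) v w) (f (z - 1) (Suc u) v)) (f (z - 1) (Suc u) w)"
    using iT assms by auto
  have hzuu1: "(f z u (Suc u)) \<in> Hom1 B \<and> src B (f z u (Suc u)) = a u \<and> tgt B (f z u (Suc u)) = a (Suc u)"
    using fh assms by auto
  have hzu1v: "(f z (Suc u) v) \<in> Hom1 B \<and> src B (f z (Suc u) v) = a (Suc u) \<and> tgt B (f z (Suc u) v) = a v"
    using fh assms by auto
  have hzvw: "(f z v w) \<in> Hom1 B \<and> src B (f z v w) = a v \<and> tgt B (f z v w) = a w"
    using fh assms by auto
  have hzuv: "(f z u v) \<in> Hom1 B \<and> src B (f z u v) = a u \<and> tgt B (f z u v) = a v"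
    using fh assms by auto
  have hzu1w: "(f z (Suc u) w) \<in> Hom1 B \<and> src B (f z (Suc u) w) = a (Suc u) \<and> tgt B (f z (Suc u) w) = a w"
    using fh assms by auto
  have hzuw: "(f z u w) \<in> Hom1 B \<and> src B (f z u w) = a u \<and> tgt B (f z u w) = a w"
    using fh assms by auto
  have hyuu1: "(f (z - 1) u (Suc u)) \<in> Hom1 B \<and> src B (f (z - 1) u (Suc u)) = a u \<and> tgt B (f (z - 1) u (Suc u)) = a (Suc u)"
    using fh assms by auto
  have hyu1v: "(f (z - 1) (Suc u) v) \<in> Hom1 B \<and> src B (f (z - 1) (Suc u) v) = a (Suc u) \<and> tgt B (f (z - 1) (Suc u) v) = a v"
    using fh assms by auto
  have hyvw: "(f (z - 1) v w) \<in> Hom1 B \<and> src B (f (z - 1) v w) = a v \<and> tgt B (f (z - 1) v w) = a w"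
    using fh assms by auto
  have hyuv: "(f (z - 1) u v) \<in> Hom1 B \<and> src B (f (z - 1) u v) = a u \<and> tgt B (f (z - 1) u v) = a v"
    using fh assms by auto
  have hyu1w: "(f (z - 1) (Suc u) w) \<in> Hom1 B \<and> src B (f (z - 1) (Suc u) w) = a (Suc u) \<and> tgt B (f (z - 1) (Suc u) w) = a w"
    using fh assms by auto
  have hyuw: "(f (z - 1) u w) \<in> Hom1 B \<and> src B (f (z - 1) u w) = a u \<and> tgt B (f (z - 1) u w) = a w"
    using fh assms by auto
  have c1: "tgt B (C (f (z - 1) (Suc u) v) (f (z - 1) u (Suc u))) = src B (f (z - 1) v w)"
    using comp_hom hyuu1 hyu1v hyvw by auto
  have c2: "tgt B (f (z - 1) u (Suc u)) = src B (C (f (z - 1) v w) (f (z - 1) (Suc u) v))"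
    using comp_hom hyuu1 hyu1v hyvw by auto
  have c3: "tgt B (f (z - 1) u (Suc u)) = src B (f (z - 1) (Suc u) v)"
    using hyuu1 hyu1v by auto
  have c4: "tgt B (f (z - 1) (Suc u) v) = src B (f (z - 1) v w)"
    using hyvw hyu1v by auto
  have c5: "tgt B (f (z - 1) u v) = src B (f (z - 1) v w)"
    using hyvw hyuv by auto
  have c6: "tgt B (f (z - 1) u (Suc u)) = src B (f (z - 1) (Suc u) w)"
    using hyuu1 hyu1w by auto
  have c7: "tgt B (f z u (Suc u)) = src B (f z (Suc u) v)"
    using hzuu1 hzu1v by auto
  have c8: "tgt B (f z (Suc u) v) = src B (f z v w)"
    using hzvw hzu1v by auto
  have c9: "tgt B (C (f z (Suc u) v) (f z u (Suc u))) = src B (f z v w)"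
    using comp_hom hzuu1 hzu1v hzvw by auto
  have c10: "tgt B (f z u (Suc u)) = src B (C (f z v w) (f z (Suc u) v))"
    using comp_hom hzuu1 hzu1v hzvw by auto
  have tP: "arr2 B (H (I (f (z - 1) v w)) (\<iota> (z - 1) u (Suc u) v)) (C (f (z - 1) v w) (C (f (z - 1) (Suc u) v) (f (z - 1) u (Suc u)))) (C (f (z - 1) v w) (f (z - 1) u v))"
    using arr_h[OF iyuu1v arr_id c1] hyvw by auto
  have tQ: "arr2 B (S (f (z - 1) v w) (f (z - 1) (Suc u) v) (f (z - 1) u (Suc u))) (C (C (f (z - 1) v w) (f (z - 1) (Suc u) v)) (f (z - 1) u (Suc u))) (C (f (z - 1) v w) (C (f (z - 1) (Suc u) v) (f (z - 1) u (Suc u))))"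
    using assoc_arr hyvw hyu1v hyuu1 c3 c4 by auto
  have isoQ: "iso2 B (S (f (z - 1) v w) (f (z - 1) (Suc u) v) (f (z - 1) u (Suc u)))"
    using assoc_iso hyvw hyu1v hyuu1 c3 c4 by auto
  have isoi: "iso2 B (\<iota> (z - 1) u (Suc u) v)"
    using iI assms by auto
  have isoP: "iso2 B (H (I (f (z - 1) v w)) (\<iota> (z - 1) u (Suc u) v))"
    using iso_hid[OF iyuu1v isoi _ c1] hyvw by auto
  have tPz: "arr2 B (H (I (f z v w)) (\<iota> z u (Suc u) v)) (C (f z v w) (C (f z (Suc u) v) (f z u (Suc u)))) (C (f z v w) (f z u v))"
    using arr_h[OF izuu1v arr_id c9] hzvw by auto
  have tQz: "arr2 B (S (f z v w) (f z (Suc u) v) (f z u (Suc u))) (C (C (f z v w) (f z (Suc u) v)) (f z u (Suc u))) (C (f z v w) (C (f z (Suc u) v) (f z u (Suc u))))"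
    using assoc_arr hzvw hzu1v hzuu1 c7 c8 by auto
  have tHcd: "arr2 B (H (E z v w) (E z u v)) (C (f (z - 1) v w) (f (z - 1) u v)) (C (f z v w) (f z u v))"
    using arr_h[OF td tc c5] .
  have tHba: "arr2 B (H (E z (Suc u) v) (E z u (Suc u))) (C (f (z - 1) (Suc u) v) (f (z - 1) u (Suc u))) (C (f z (Suc u) v) (f z u (Suc u)))"
    using arr_h[OF ta tb c3] .
  have tHc_ba: "arr2 B (H (E z v w) (H (E z (Suc u) v) (E z u (Suc u)))) (C (f (z - 1) v w) (C (f (z - 1) (Suc u) v) (f (z - 1) u (Suc u)))) (C (f z v w) (C (f z (Suc u) v) (f z u (Suc u))))"
    using arr_h[OF tHba tc c1] .
  have tHcb: "arr2 B (H (E z v w) (E z (Suc u) v)) (C (f (z - 1) v w) (f (z - 1) (Suc u) v)) (C (f z v w) (f z (Suc u) v))"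
    using arr_h[OF tb tc c4] .
  have tHcb_a: "arr2 B (H (H (E z v w) (E z (Suc u) v)) (E z u (Suc u))) (C (C (f (z - 1) v w) (f (z - 1) (Suc u) v)) (f (z - 1) u (Suc u))) (C (C (f z v w) (f z (Suc u) v)) (f z u (Suc u)))"
    using arr_h[OF ta tHcb c2] .
  have tHea: "arr2 B (H (E z (Suc u) w) (E z u (Suc u))) (C (f (z - 1) (Suc u) w) (f (z - 1) u (Suc u))) (C (f z (Suc u) w) (f z u (Suc u)))"
    using arr_h[OF ta te c6] .
  have tK: "arr2 B (H (\<iota> (z - 1) (Suc u) v w) (I (f (z - 1) u (Suc u)))) (C (C (f (z - 1) v w) (f (z - 1) (Suc u) v)) (f (z - 1) u (Suc u))) (C (f (z - 1) (Suc u) w) (f (z - 1) u (Suc u)))"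
    using arr_h[OF arr_id iyu1vw c2] hyuu1 by auto
  have tKz: "arr2 B (H (\<iota> z (Suc u) v w) (I (f z u (Suc u)))) (C (C (f z v w) (f z (Suc u) v)) (f z u (Suc u))) (C (f z (Suc u) w) (f z u (Suc u)))"
    using arr_h[OF arr_id izu1vw c10] hzuu1 by auto
  have tX: "arr2 B (V (\<iota> z u v w) (H (E z v w) (E z u v))) (C (f (z - 1) v w) (f (z - 1) u v)) (f z u w)"
    using arr_v[OF tHcd izuvw] .
  have tY: "arr2 B (V (E z u w) (\<iota> (z - 1) u v w)) (C (f (z - 1) v w) (f (z - 1) u v)) (f z u w)"
    using arr_v[OF iyuvw tg] .
  have s2: "V (H (E z v w) (E z u v)) (H (I (f (z - 1) v w)) (\<iota> (z - 1) u (Suc u) v)) = H (E z v w) (V (E z u v) (\<iota> (z - 1) u (Suc u) v))"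
    using interchange[OF iyuu1v td arr_id tc c1] idr[OF tc] hyvw by auto
  have s3: "V (E z u v) (\<iota> (z - 1) u (Suc u) v) = V (\<iota> z u (Suc u) v) (H (E z (Suc u) v) (E z u (Suc u)))"
    using A1base[of u v z] assms by auto
  have s4: "H (E z v w) (V (\<iota> z u (Suc u) v) (H (E z (Suc u) v) (E z u (Suc u)))) = V (H (I (f z v w)) (\<iota> z u (Suc u) v)) (H (E z v w) (H (E z (Suc u) v) (E z u (Suc u))))"
    using interchange[OF tHba izuu1v tc arr_id c1] idl[OF tc] hzvw by auto
  have s8a: "V (H (\<iota> z (Suc u) v w) (I (f z u (Suc u)))) (H (H (E z v w) (E z (Suc u) v)) (E z u (Suc u))) = H (V (\<iota> z (Suc u) v w) (H (E z v w) (E z (Suc u) v))) (V (I (f z u (Suc u))) (E z u (Suc u)))"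
    using interchange[OF ta arr_id tHcb izu1vw c2] hzuu1 by auto
  have s8b: "V (\<iota> z (Suc u) v w) (H (E z v w) (E z (Suc u) v)) = V (E z (Suc u) w) (\<iota> (z - 1) (Suc u) v w)"
    using IH .
  have s8c: "H (V (E z (Suc u) w) (\<iota> (z - 1) (Suc u) v w)) (V (E z u (Suc u)) (I (f (z - 1) u (Suc u)))) = V (H (E z (Suc u) w) (E z u (Suc u))) (H (\<iota> (z - 1) (Suc u) v w) (I (f (z - 1) u (Suc u))))"
    using interchange[OF arr_id ta iyu1vw te c2] hyuu1 by auto
  have s8: "V (H (\<iota> z (Suc u) v w) (I (f z u (Suc u)))) (H (H (E z v w) (E z (Suc u) v)) (E z u (Suc u))) = V (H (E z (Suc u) w) (E z u (Suc u))) (H (\<iota> (z - 1) (Suc u) v w) (I (f (z - 1) u (Suc u))))"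
    using s8a s8b s8c idl[OF ta] idr[OF ta] by simp
  have a2z: "V (V (\<iota> z u v w) (H (I (f z v w)) (\<iota> z u (Suc u) v))) (S (f z v w) (f z (Suc u) v) (f z u (Suc u))) = V (\<iota> z u (Suc u) w) (H (\<iota> z (Suc u) v w) (I (f z u (Suc u))))"
    using A2'[of u "Suc u" v w z] assms by auto
  have a2y: "V (V (\<iota> (z - 1) u v w) (H (I (f (z - 1) v w)) (\<iota> (z - 1) u (Suc u) v))) (S (f (z - 1) v w) (f (z - 1) (Suc u) v) (f (z - 1) u (Suc u))) = V (\<iota> (z - 1) u (Suc u) w) (H (\<iota> (z - 1) (Suc u) v w) (I (f (z - 1) u (Suc u))))"
    using A2'[of u "Suc u" v w "z - 1"] assms by auto
  have a1b: "V (\<iota> z u (Suc u) w) (H (E z (Suc u) w) (E z u (Suc u))) = V (E z u w) (\<iota> (z - 1) u (Suc u) w)"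
    using A1base[of u w z] assms by auto
  have anat: "V (S (f z v w) (f z (Suc u) v) (f z u (Suc u))) (H (H (E z v w) (E z (Suc u) v)) (E z u (Suc u))) = V (H (E z v w) (H (E z (Suc u) v) (E z u (Suc u)))) (S (f (z - 1) v w) (f (z - 1) (Suc u) v) (f (z - 1) u (Suc u)))"
    using assoc_nat[OF ta tb tc c3 c4] .
  have "V (V (V (\<iota> z u v w) (H (E z v w) (E z u v))) (H (I (f (z - 1) v w)) (\<iota> (z - 1) u (Suc u) v))) (S (f (z - 1) v w) (f (z - 1) (Suc u) v) (f (z - 1) u (Suc u))) = V (V (\<iota> z u v w) (V (H (E z v w) (E z u v)) (H (I (f (z - 1) v w)) (\<iota> (z - 1) u (Suc u) v)))) (S (f (z - 1) v w) (f (z - 1) (Suc u) v) (f (z - 1) u (Suc u)))"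
    using vassoc[OF tP tHcd izuvw] by simp
  also have "\<dots> = V (V (\<iota> z u v w) (V (H (I (f z v w)) (\<iota> z u (Suc u) v)) (H (E z v w) (H (E z (Suc u) v) (E z u (Suc u)))))) (S (f (z - 1) v w) (f (z - 1) (Suc u) v) (f (z - 1) u (Suc u)))"
    using s2 s3 s4 by simp
  also have "\<dots> = V (V (V (\<iota> z u v w) (H (I (f z v w)) (\<iota> z u (Suc u) v))) (H (E z v w) (H (E z (Suc u) v) (E z u (Suc u))))) (S (f (z - 1) v w) (f (z - 1) (Suc u) v) (f (z - 1) u (Suc u)))"
    using vassoc[OF tHc_ba tPz izuvw] by simp
  also have "\<dots> = V (V (\<iota> z u v w) (H (I (f z v w)) (\<iota> z u (Suc u) v))) (V (H (E z v w) (H (E z (Suc u) v) (E z u (Suc u)))) (S (f (z - 1) v w) (f (z - 1) (Suc u) v) (f (z - 1) u (Suc u))))"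
    using vassoc[OF tQ tHc_ba arr_v[OF tPz izuvw]] by simp
  also have "\<dots> = V (V (\<iota> z u v w) (H (I (f z v w)) (\<iota> z u (Suc u) v))) (V (S (f z v w) (f z (Suc u) v) (f z u (Suc u))) (H (H (E z v w) (E z (Suc u) v)) (E z u (Suc u))))"
    using anat by simp
  also have "\<dots> = V (V (V (\<iota> z u v w) (H (I (f z v w)) (\<iota> z u (Suc u) v))) (S (f z v w) (f z (Suc u) v) (f z u (Suc u)))) (H (H (E z v w) (E z (Suc u) v)) (E z u (Suc u)))"
    using vassoc[OF tHcb_a tQz arr_v[OF tPz izuvw]] by simp
  also have "\<dots> = V (V (\<iota> z u (Suc u) w) (H (\<iota> z (Suc u) v w) (I (f z u (Suc u))))) (H (H (E z v w) (E z (Suc u) v)) (E z u (Suc u)))"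
    using a2z by simp
  also have "\<dots> = V (\<iota> z u (Suc u) w) (V (H (\<iota> z (Suc u) v w) (I (f z u (Suc u)))) (H (H (E z v w) (E z (Suc u) v)) (E z u (Suc u))))"
    using vassoc[OF tHcb_a tKz izuu1w] by simp
  also have "\<dots> = V (\<iota> z u (Suc u) w) (V (H (E z (Suc u) w) (E z u (Suc u))) (H (\<iota> (z - 1) (Suc u) v w) (I (f (z - 1) u (Suc u)))))"
    using s8 by simp
  also have "\<dots> = V (V (\<iota> z u (Suc u) w) (H (E z (Suc u) w) (E z u (Suc u)))) (H (\<iota> (z - 1) (Suc u) v w) (I (f (z - 1) u (Suc u))))"
    using vassoc[OF tK tHea izuu1w] by simp
  also have "\<dots> = V (V (E z u w) (\<iota> (z - 1) u (Suc u) w)) (H (\<iota> (z - 1) (Suc u) v w) (I (f (z - 1) u (Suc u))))"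
    using a1b by simp
  also have "\<dots> = V (E z u w) (V (\<iota> (z - 1) u (Suc u) w) (H (\<iota> (z - 1) (Suc u) v w) (I (f (z - 1) u (Suc u)))))"
    using vassoc[OF tK iyuu1w tg] by simp
  also have "\<dots> = V (E z u w) (V (V (\<iota> (z - 1) u v w) (H (I (f (z - 1) v w)) (\<iota> (z - 1) u (Suc u) v))) (S (f (z - 1) v w) (f (z - 1) (Suc u) v) (f (z - 1) u (Suc u))))"
    using a2y by simp
  also have "\<dots> = V (V (E z u w) (V (\<iota> (z - 1) u v w) (H (I (f (z - 1) v w)) (\<iota> (z - 1) u (Suc u) v)))) (S (f (z - 1) v w) (f (z - 1) (Suc u) v) (f (z - 1) u (Suc u)))"
    using vassoc[OF tQ arr_v[OF tP iyuvw] tg] by simp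
  also have "\<dots> = V (V (V (E z u w) (\<iota> (z - 1) u v w)) (H (I (f (z - 1) v w)) (\<iota> (z - 1) u (Suc u) v))) (S (f (z - 1) v w) (f (z - 1) (Suc u) v) (f (z - 1) u (Suc u)))"
    using vassoc[OF tP iyuvw tg] by simp
  finally have eq: "V (V (V (\<iota> z u v w) (H (E z v w) (E z u v))) (H (I (f (z - 1) v w)) (\<iota> (z - 1) u (Suc u) v))) (S (f (z - 1) v w) (f (z - 1) (Suc u) v) (f (z - 1) u (Suc u))) = V (V (V (E z u w) (\<iota> (z - 1) u v w)) (H (I (f (z - 1) v w)) (\<iota> (z - 1) u (Suc u) v))) (S (f (z - 1) v w) (f (z - 1) (Suc u) v) (f (z - 1) u (Suc u)))" .
  have "V (V (\<iota> z u v w) (H (E z v w) (E z u v))) (H (I (f (z - 1) v w)) (\<iota> (z - 1) u (Suc u) v)) = V (V (E z u w) (\<iota> (z - 1) u v w)) (H (I (f (z - 1) v w)) (\<iota> (z - 1) u (Suc u) v))"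
    using cancel[OF arr_v[OF tP tX] arr_v[OF tP tY] tQ isoQ eq] .
  then show ?thesis using cancel[OF tX tY tP isoP] by simp
qed

lemma A1E: "u < v \<Longrightarrow> v < w \<Longrightarrow> w \<le> j \<Longrightarrow> 1 \<le> z \<Longrightarrow> z \<le> k \<Longrightarrow>
   V (\<iota> z u v w) (H (E z v w) (E z u v)) = V (E z u w) (\<iota> (z - 1) u v w)"
proof (induction "v - Suc u" arbitrary: u)
  case 0
  then have "v = Suc u" by auto
  then show ?case using A1base 0 by auto
next
  case (Suc n)
  then have uv: "Suc u < v" by auto
  have IH: "V (\<iota> z (Suc u) v w) (H (E z v w) (E z (Suc u) v)) = V (E z (Suc u) w) (\<iota> (z - 1) (Suc u) v w)"
    using Suc uv by auto
  show ?case using A1step[OF uv _ _ _ _ IH] Suc by auto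
qed

lemma exist: "NB_elem B j k a f E \<iota>"
  unfolding NB_elem_def axA1_def using obj one_cells ET iota_typ A1E A2 by auto

lemma uniq: assumes nb: "NB_elem B j k a f (ext_alpha alpha1 \<beta>) \<iota>"
  shows "u < v \<Longrightarrow> v \<le> j \<Longrightarrow> 1 \<le> z \<Longrightarrow> z \<le> k \<Longrightarrow> ext_alpha alpha1 \<beta> z u v = E z u v"
proof (induction "v - Suc u" arbitrary: u)
  case 0
  then have "v = Suc u" by auto
  then show ?case using E1 unfolding ext_alpha_def by auto
next
  case (Suc n)
  then have uv: "Suc u < v" by auto
  have IH: "ext_alpha alpha1 \<beta> z (Suc u) v = E z (Suc u) v" using Suc uv by auto
  have b1: "ext_alpha alpha1 \<beta> z u (Suc u) = E z u (Suc u)" using E1 unfolding ext_alpha_def by auto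
  have a1: "V (\<iota> z u (Suc u) v) (H (ext_alpha alpha1 \<beta> z (Suc u) v) (ext_alpha alpha1 \<beta> z u (Suc u)))
      = V (ext_alpha alpha1 \<beta> z u v) (\<iota> (z - 1) u (Suc u) v)"
  proof -
    have ax: "axA1 B j k f (ext_alpha alpha1 \<beta>) \<iota>" using nb unfolding NB_elem_def by auto
    show ?thesis using ax[unfolded axA1_def, rule_format, of u "Suc u" v z] uv Suc.prems by auto
  qed
  have tb: "arr2 B (ext_alpha alpha1 \<beta> z u v) (f (z - 1) u v) (f z u v)"
    using nb Suc unfolding NB_elem_def by auto
  have eq: "V (ext_alpha alpha1 \<beta> z u v) (\<iota> (z - 1) u (Suc u) v) = V (E z u v) (\<iota> (z - 1) u (Suc u) v)"
    using a1 IH b1 A1base[of u v z] Suc uv by auto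
  show ?case using cancel[OF tb ET iT iI eq] Suc uv by auto
qed

lemma main: "\<exists>\<alpha>. NB_elem B j k a f (ext_alpha alpha1 \<alpha>) \<iota> \<and>
           (\<forall>\<beta>. NB_elem B j k a f (ext_alpha alpha1 \<beta>) \<iota> \<longrightarrow>
              (\<forall>z u v. 1 \<le> z \<and> z \<le> k \<and> Suc u < v \<and> v \<le> j \<longrightarrow> \<beta> z u v = \<alpha> z u v))"
proof (intro exI conjI allI impI)
  show "NB_elem B j k a f (ext_alpha alpha1 (\<lambda>z u v. AL (v - Suc u) z u)) \<iota>"
    using exist unfolding E_def .
  fix \<beta> z u v
  assume nb: "NB_elem B j k a f (ext_alpha alpha1 \<beta>) \<iota>"
    and c: "1 \<le> z \<and> z \<le> k \<and> Suc u < v \<and> v \<le> j"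
  have "ext_alpha alpha1 \<beta> z u v = E z u v" using uniq[OF nb] c by auto
  then show "\<beta> z u v = AL (v - Suc u) z u" using c unfolding E_def ext_alpha_def by auto
qed

end

theorem mainTheorem16:
  fixes B :: "('o, 'a, 'c, 'm) bicat_scheme"
    and j k :: nat
    and a :: "nat \<Rightarrow> 'o"
    and f :: "nat \<Rightarrow> nat \<Rightarrow> nat \<Rightarrow> 'a"
    and alpha1 :: "nat \<Rightarrow> nat \<Rightarrow> 'c"
    and \<iota> :: "nat \<Rightarrow> nat \<Rightarrow> nat \<Rightarrow> nat \<Rightarrow> 'c"
  assumes bicat: "bicategory B"
    and obj: "\<forall>u\<le>j. a u \<in> Obj B"
    and one_cells: "\<forall>u v z. u < v \<and> v \<le> j \<and> z \<le> k \<longrightarrow> hom1 B (f z u v) (a u) (a v)"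
    and alpha1_typ: "\<forall>u z. u < j \<and> 1 \<le> z \<and> z \<le> k \<longrightarrow>
                       arr2 B (alpha1 z u) (f (z - 1) u (Suc u)) (f z u (Suc u))"
    and iota_typ: "\<forall>u v w z. u < v \<and> v < w \<and> w \<le> j \<and> z \<le> k \<longrightarrow>
                     arr2 B (\<iota> z u v w) (comp1 B (f z v w) (f z u v)) (f z u w) \<and> iso2 B (\<iota> z u v w)"
    and A2: "axA2 B j k f \<iota>"
  shows "\<exists>\<alpha>. NB_elem B j k a f (ext_alpha alpha1 \<alpha>) \<iota> \<and>
           (\<forall>\<beta>. NB_elem B j k a f (ext_alpha alpha1 \<beta>) \<iota> \<longrightarrow>
              (\<forall>z u v. 1 \<le> z \<and> z \<le> k \<and> Suc u < v \<and> v \<le> j \<longrightarrow> \<beta> z u v = \<alpha> z u v))"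
proof -
  interpret NBs B j k a f alpha1 \<iota>
    by (unfold_locales; fact assms)
  show ?thesis by (rule main)
qed

end
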